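(* Let $F(u,v)=\sum_{p,q\geq1}F_{p,q}(t)u^pv^q=\sum_{n\geq1}f_n(u,v)t^n$, where $F_{p,q}(t)=\sum_{n\geq1}|\{e\in\mathbf{I}_n(\mathcal{AW}): e\text{ has parameters }(p,q)\}|\,t^n$. Then $$F(u,v)=tuv+\frac{tuv}{v-u}\bigl(F(v,1)-F(u,1)\bigr)+\frac{tuv}{1-u}\bigl(F(u,1)-F(u,u)\bigr).$$ Equivalently, $f_1(u,v)=uv$ and for $n\geq2$, $$f_n(u,v)=\frac{uv}{v-u}\bigl(f_{n-1}(v,1)-f_{n-1}(u,1)\bigr)+\frac{uv}{1-u}\bigl(f_{n-1}(u,1)-f_{n-1}(u,u)\bigr).$$
   Context: $\mathbf{I}_n$ is the set of inversion sequences $e=(e_1,\ldots,e_n)$ with $0\leq e_i<i$. $\mathbf{I}_n(\mathcal{AW})$ is the set of $e\in\mathbf{I}_n$ such that $e_i\leq\max\{e_{i-2},e_{i-1}\}+1$ for every $2<i\leq n$. The parameters of $e\in\mathbf{I}_n(\mathcal{AW})$ are $(p,q)$ with $p=e_n+1$ and $q=\max\{e_{n-1},e_n\}+1-e_n$, using the convention $e_0=0$. Each $f_n(u,v)$ is a polynomial in $u,v$. *)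

theory Defs
  imports Complex_Main
begin

text \<open>Sequences e = (e_1,...,e_n) are lists of length n; entry e_i is e ! (i - 1).
  The accessor ent uses the convention e_0 = 0.\<close>

definition ent :: "nat list \<Rightarrow> nat \<Rightarrow> nat" where
  "ent e i = (if i = 0 then 0 else e ! (i - 1))"

definition inv_seqs :: "nat \<Rightarrow> nat list set" where
  "inv_seqs n = {e. length e = n \<and> (\<forall>i\<in>{1..n}. ent e i < i)}"

definition AW_seqs :: "nat \<Rightarrow> nat list set" where
  "AW_seqs n = {e \<in> inv_seqs n.
     \<forall>i. 2 < i \<and> i \<le> n \<longrightarrow> ent e i \<le> max (ent e (i - 2)) (ent e (i - 1)) + 1}"

definition par_p :: "nat list \<Rightarrow> nat" where
  "par_p e = ent e (length e) + 1"

definition par_q :: "nat list \<Rightarrow> nat" where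
  "par_q e = max (ent e (length e - 1)) (ent e (length e)) + 1 - ent e (length e)"

definition f_AW :: "nat \<Rightarrow> real \<Rightarrow> real \<Rightarrow> real" where
  "f_AW n u v = (\<Sum>e\<in>AW_seqs n. u ^ par_p e * v ^ par_q e)"

end

theory Submission
  imports Defs
begin

definition Mx :: "nat list \<Rightarrow> nat" where
  "Mx e = max (ent e (length e - 1)) (ent e (length e))"

lemma ent_snoc: "length e = m \<Longrightarrow> i \<le> m \<Longrightarrow> ent (e @ [x]) i = ent e i"
  by (auto simp: ent_def nth_append)

lemma ent_last: "length e = m \<Longrightarrow> ent (e @ [x]) (Suc m) = x"
  by (auto simp: ent_def nth_append)

lemma ent_bound: "e \<in> inv_seqs m \<Longrightarrow> i \<le> m \<Longrightarrow> ent e i \<le> i - 1"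
proof (cases "i = 0")
  case True thus ?thesis by (simp add: ent_def)
next
  case False
  assume "e \<in> inv_seqs m" "i \<le> m"
  hence "ent e i < i" using False by (auto simp: inv_seqs_def)
  thus ?thesis by simp
qed

lemma Mx_bound: "e \<in> inv_seqs m \<Longrightarrow> m \<ge> 1 \<Longrightarrow> Mx e \<le> m - 1"
proof -
  assume a: "e \<in> inv_seqs m" "m \<ge> 1"
  hence l: "length e = m" by (simp add: inv_seqs_def)
  have "ent e (m-1) \<le> m - 1 - 1" using ent_bound[OF a(1), of "m-1"] by simp
  moreover have "ent e m \<le> m - 1" using ent_bound[OF a(1), of m] by simp
  ultimately show ?thesis using l by (simp add: Mx_def)
qed

lemma AW_Suc:
  assumes m: "m \<ge> 1"
  shows "AW_seqs (Suc m) = (\<lambda>(e,x). e @ [x]) ` (SIGMA e:AW_seqs m. {..Mx e + 1})"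
proof
  show "AW_seqs (Suc m) \<subseteq> (\<lambda>(e,x). e @ [x]) ` (SIGMA e:AW_seqs m. {..Mx e + 1})"
  proof
    fix e' assume e': "e' \<in> AW_seqs (Suc m)"
    hence len: "length e' = Suc m" by (simp add: AW_seqs_def inv_seqs_def)
    obtain e x where ex: "e' = e @ [x]"
      by (metis len length_0_conv nat.simps(3) rev_exhaust)
    have le: "length e = m" using len ex by simp
    have inv: "\<forall>i\<in>{1..Suc m}. ent e' i < i" and aw: "\<forall>i. 2 < i \<and> i \<le> Suc m \<longrightarrow> ent e' i \<le> max (ent e' (i - 2)) (ent e' (i - 1)) + 1"
      using e' by (auto simp: AW_seqs_def inv_seqs_def)
    have ee: "\<And>i. i \<le> m \<Longrightarrow> ent e' i = ent e i" using ex le ent_snoc by simp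
    have einv: "e \<in> inv_seqs m" unfolding inv_seqs_def
    proof (intro CollectI conjI ballI)
      fix i assume i: "i \<in> {1..m}"
      thus "ent e i < i" using inv[rule_format, of i] ee[of i] by auto
    qed (rule le)
    have eaw: "e \<in> AW_seqs m" unfolding AW_seqs_def using einv aw ee
    proof (intro CollectI conjI allI impI)
      fix i assume "2 < i \<and> i \<le> m"
      moreover have "i - 2 \<le> m" "i - 1 \<le> m" using \<open>2 < i \<and> i \<le> m\<close> by auto
      ultimately show "ent e i \<le> max (ent e (i - 2)) (ent e (i - 1)) + 1"
        using aw[rule_format, of i] ee[of i] ee[of "i-2"] ee[of "i-1"] by simp
    qed (auto simp: einv)
    have "x \<le> Mx e + 1"
    proof (cases "m = 1")
      case True
      have "ent e' (Suc m) < Suc m" using inv by auto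
      hence "x < 2" using ex le True ent_last[of e m x] by simp
      thus ?thesis by simp
    next
      case False
      hence "2 < Suc m" using m by simp
      hence "ent e' (Suc m) \<le> max (ent e' (Suc m - 2)) (ent e' (Suc m - 1)) + 1" using aw[rule_format, of "Suc m"] by simp
      thus ?thesis using ex le ent_last ee[of "m-1"] ee[of m] by (simp add: Mx_def)
    qed
    thus "e' \<in> (\<lambda>(e,x). e @ [x]) ` (SIGMA e:AW_seqs m. {..Mx e + 1})"
      using ex eaw by auto
  qed
next
  show "(\<lambda>(e,x). e @ [x]) ` (SIGMA e:AW_seqs m. {..Mx e + 1}) \<subseteq> AW_seqs (Suc m)"
  proof clarify
    fix e x assume eaw: "e \<in> AW_seqs m" and x: "x \<le> Mx e + 1"
    have einv: "e \<in> inv_seqs m" using eaw by (simp add: AW_seqs_def)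
    have le: "length e = m" using einv by (simp add: inv_seqs_def)
    have ee: "\<And>i. i \<le> m \<Longrightarrow> ent (e@[x]) i = ent e i" using le ent_snoc by simp
    have xl: "ent (e@[x]) (Suc m) = x" using le ent_last by simp
    have "Mx e \<le> m - 1" using Mx_bound[OF einv m] .
    hence xm: "x < Suc m" using x m by simp
    have inv: "e @ [x] \<in> inv_seqs (Suc m)"
      unfolding inv_seqs_def
    proof (intro CollectI conjI ballI)
      fix i assume i: "i \<in> {1..Suc m}"
      show "ent (e @ [x]) i < i"
      proof (cases "i = Suc m")
        case True thus ?thesis using xl xm by simp
      next
        case False thus ?thesis using i ee[of i] einv by (auto simp: inv_seqs_def)
      qed
    qed (simp add: le)
    show "e @ [x] \<in> AW_seqs (Suc m)"
      unfolding AW_seqs_def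
    proof (intro CollectI conjI allI impI)
      fix i assume i: "2 < i \<and> i \<le> Suc m"
      show "ent (e @ [x]) i \<le> max (ent (e @ [x]) (i - 2)) (ent (e @ [x]) (i - 1)) + 1"
      proof (cases "i = Suc m")
        case True
        thus ?thesis using xl x ee[of "m-1"] ee[of m] le by (simp add: Mx_def)
      next
        case False
        thus ?thesis using i ee[of i] ee[of "i-2"] ee[of "i-1"] eaw by (auto simp: AW_seqs_def)
      qed
    qed (rule inv)
  qed
qed

lemma finite_AW: "finite (AW_seqs n)"
proof -
  have "AW_seqs n \<subseteq> {xs. set xs \<subseteq> {..<n} \<and> length xs = n}"
  proof
    fix e assume "e \<in> AW_seqs n"
    hence l: "length e = n" and b: "\<forall>i\<in>{1..n}. ent e i < i"
      by (auto simp: AW_seqs_def inv_seqs_def)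
    have "set e \<subseteq> {..<n}"
    proof
      fix y assume "y \<in> set e"
      then obtain j where j: "j < n" "e ! j = y" using l by (auto simp: in_set_conv_nth)
      have "ent e (Suc j) < Suc j" using b j by auto
      thus "y \<in> {..<n}" using j by (simp add: ent_def)
    qed
    thus "e \<in> {xs. set xs \<subseteq> {..<n} \<and> length xs = n}" using l by simp
  qed
  moreover have "finite {xs. set xs \<subseteq> {..<n} \<and> length xs = n}"
    by (rule finite_lists_length_eq) simp
  ultimately show ?thesis by (rule finite_subset)
qed

lemma geoA: "((v::real) - u) * (\<Sum>x<k. u^(x+1) * v^(k-x)) = u*v*(v^k - u^k)"
proof (induction k)
  case (Suc k)
  have "(\<Sum>x<Suc k. u^(x+1) * v^(Suc k-x)) = v * (\<Sum>x<k. u^(x+1) * v^(k-x)) + u^(k+1)*v"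
    by (simp add: sum_distrib_left Suc_diff_le mult.assoc mult.left_commute)
  hence "(v - u) * (\<Sum>x<Suc k. u^(x+1) * v^(Suc k-x)) = v * ((v - u) * (\<Sum>x<k. u^(x+1) * v^(k-x))) + (v-u)*u^(k+1)*v"
    by (simp add: algebra_simps)
  also have "\<dots> = v * (u*v*(v^k - u^k)) + (v-u)*u^(k+1)*v" using Suc by simp
  also have "\<dots> = u*v*(v^Suc k - u^Suc k)" by (simp add: algebra_simps)
  finally show ?case .
qed simp

lemma geoB: "(1 - (u::real)) * (\<Sum>j<d. u^(a+2+j) * v) = u*v*(u^(a+1) - u^(a+1+d))"
proof (induction d)
  case (Suc d)
  have "(1 - u) * (\<Sum>j<Suc d. u^(a+2+j) * v) = (1 - u) * (\<Sum>j<d. u^(a+2+j) * v) + (1-u)*u^(a+2+d)*v"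
    by (simp add: algebra_simps)
  also have "\<dots> = u*v*(u^(a+1) - u^(a+1+d)) + (1-u)*u^(a+2+d)*v" using Suc by simp
  also have "\<dots> = u*v*(u^(a+1) - u^(a+1+Suc d))" by (simp add: algebra_simps)
  finally show ?case .
qed simp

lemma splitC: "(\<Sum>x<a+1+d. (u::real)^(x+1) * v^(max a x + 1 - x)) =
   (\<Sum>x<a+1. u^(x+1) * v^(a+1-x)) + (\<Sum>j<d. u^(a+2+j) * v)"
proof (induction d)
  case 0
  show ?case by (simp add: max_def)
next
  case (Suc d)
  have "max a (a+1+d) + 1 - (a+1+d) = 1" by simp
  thus ?case using Suc by (simp add: add.commute add.left_commute)
qed

lemma inner:
  assumes "(u::real) \<noteq> v" "u \<noteq> 1" "a \<le> M"
  shows "(\<Sum>x\<in>{..M+1}. u^(x+1) * v^(max a x + 1 - x)) =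
    u*v/(v-u) * (v^(a+1) - u^(a+1)) + u*v/(1-u)*(u^(a+1) - u^(a+1) * u^(M+1-a))"
proof -
  define d where "d = M + 1 - a"
  have e: "{..M+1} = {..<a+1+d}" using assms(3) by (auto simp: d_def)
  have s1: "(\<Sum>x<a+1. u^(x+1) * v^(a+1-x)) = u*v/(v-u) * (v^(a+1) - u^(a+1))"
    using geoA[of v u "a+1"] assms(1) by (simp add: field_simps)
  have s2: "(\<Sum>j<d. u^(a+2+j) * v) = u*v/(1-u)*(u^(a+1) - u^(a+1+d))"
    using geoB[of u a v d] assms(2) by (simp add: field_simps)
  show ?thesis unfolding e splitC s1 s2 by (simp add: d_def power_add)
qed

theorem proposition5p2:
  shows "(\<forall>u v. f_AW 1 u v = u * v) \<and>
    (\<forall>n u v. 2 \<le> n \<longrightarrow> u \<noteq> v \<longrightarrow> u \<noteq> 1 \<longrightarrow>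
       f_AW n u v = u * v / (v - u) * (f_AW (n - 1) v 1 - f_AW (n - 1) u 1)
                  + u * v / (1 - u) * (f_AW (n - 1) u 1 - f_AW (n - 1) u u))"
proof (intro conjI allI impI)
  fix u v :: real
  have "AW_seqs 1 = {[0]}"
  proof
    show "AW_seqs 1 \<subseteq> {[0]}"
    proof
      fix e assume "e \<in> AW_seqs 1"
      hence "length e = 1" "ent e 1 < 1" by (auto simp: AW_seqs_def inv_seqs_def)
      thus "e \<in> {[0]}" by (cases e) (auto simp: ent_def)
    qed
  qed (auto simp: AW_seqs_def inv_seqs_def ent_def)
  thus "f_AW 1 u v = u * v" by (simp add: f_AW_def par_p_def par_q_def ent_def)
next
  fix n :: nat and u v :: real
  assume n: "2 \<le> n" and uv: "u \<noteq> v" and u1: "u \<noteq> 1"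
  define m where "m = n - 1"
  have nm: "n = Suc m" and m: "m \<ge> 1" using n by (auto simp: m_def)
  define c1 where "c1 = u * v / (v - u)"
  define c2 where "c2 = u * v / (1 - u)"
  have inj: "inj_on (\<lambda>(e,x). e @ [x]) (SIGMA e:AW_seqs m. {..Mx e + 1})"
    by (auto simp: inj_on_def)
  have fin: "finite (AW_seqs m)" by (rule finite_AW)
  have "f_AW n u v = (\<Sum>e'\<in>AW_seqs (Suc m). u ^ par_p e' * v ^ par_q e')"
    by (simp add: f_AW_def nm)
  also have "\<dots> = (\<Sum>(e,x)\<in>(SIGMA e:AW_seqs m. {..Mx e + 1}). u ^ par_p (e@[x]) * v ^ par_q (e@[x]))"
    unfolding AW_Suc[OF m] by (subst sum.reindex[OF inj]) (simp add: case_prod_unfold)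
  also have "\<dots> = (\<Sum>e\<in>AW_seqs m. \<Sum>x\<in>{..Mx e + 1}. u ^ par_p (e@[x]) * v ^ par_q (e@[x]))"
    by (rule sum.Sigma[symmetric]) (auto simp: fin)
  also have "\<dots> = (\<Sum>e\<in>AW_seqs m. c1 * (v ^ par_p e * 1 ^ par_q e - u ^ par_p e * 1 ^ par_q e)
       + c2 * (u ^ par_p e * 1 ^ par_q e - u ^ par_p e * u ^ par_q e))"
  proof (rule sum.cong[OF refl])
    fix e assume eaw: "e \<in> AW_seqs m"
    hence le: "length e = m" by (simp add: AW_seqs_def inv_seqs_def)
    define a where "a = ent e m"
    have aM: "a \<le> Mx e" by (simp add: a_def Mx_def le)
    have pp: "\<And>x. par_p (e@[x]) = x + 1" using le ent_last by (simp add: par_p_def)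
    have qq: "\<And>x. par_q (e@[x]) = max a x + 1 - x"
      using le ent_last ent_snoc[of e m m] by (simp add: par_q_def a_def)
    have pe: "par_p e = a + 1" by (simp add: par_p_def le a_def)
    have qe: "par_q e = Mx e + 1 - a" by (simp add: par_q_def le a_def Mx_def)
    show "(\<Sum>x\<in>{..Mx e + 1}. u ^ par_p (e@[x]) * v ^ par_q (e@[x])) =
       c1 * (v ^ par_p e * 1 ^ par_q e - u ^ par_p e * 1 ^ par_q e)
       + c2 * (u ^ par_p e * 1 ^ par_q e - u ^ par_p e * u ^ par_q e)"
      unfolding pp qq pe qe c1_def c2_def using inner[OF uv u1 aM] by simp
  qed
  also have "\<dots> = c1 * (f_AW m v 1 - f_AW m u 1) + c2 * (f_AW m u 1 - f_AW m u u)"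
    by (simp add: f_AW_def sum.distrib sum_distrib_left sum_subtractf right_diff_distrib)
  finally show "f_AW n u v = u * v / (v - u) * (f_AW (n - 1) v 1 - f_AW (n - 1) u 1)
                  + u * v / (1 - u) * (f_AW (n - 1) u 1 - f_AW (n - 1) u u)"
    by (simp add: c1_def c2_def m_def)
qed

end
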